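(* Let $F$ be a uniform set-system. The following are equivalent: (1) $F$ is an HKE set-system; (2) for every two non-empty disjoint subfamilies $\Gamma_1,\Gamma_2\subseteq F$, $$\Big|\bigcap\Gamma_1-\bigcup\Gamma_2\Big|=\Big|\bigcap\Gamma_2-\bigcup\Gamma_1\Big|;$$ (3) the equality in (2) holds for every two non-empty disjoint subfamilies $\Gamma_1,\Gamma_2\subseteq F$ with $\Gamma_1\cup\Gamma_2=F$.
   Context: A set-system is a family of sets; throughout, set-systems are non-empty finite families of finite non-empty sets. A set-system $F$ is uniform if all its members have the same cardinality, denoted $\alpha(F)$. A set-system $F$ is a hereditary König–Egerváry (HKE) set-system if there is a positive integer $\alpha$ such that $|\bigcup\Gamma|+|\bigcap\Gamma|=2\alpha$ for every non-empty subfamily $\Gamma\subseteq F$. Here $X-Y$ denotes set difference. *)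

theory Defs
  imports Main
begin

definition set_system :: "'a set set \<Rightarrow> bool" where
  "set_system F \<longleftrightarrow> F \<noteq> {} \<and> finite F \<and> (\<forall>S\<in>F. finite S \<and> S \<noteq> {})"

definition uniform :: "'a set set \<Rightarrow> bool" where
  "uniform F \<longleftrightarrow> (\<forall>S\<in>F. \<forall>T\<in>F. card S = card T)"

definition HKE :: "'a set set \<Rightarrow> bool" where
  "HKE F \<longleftrightarrow> (\<exists>\<alpha>::nat. \<alpha> > 0 \<and>
     (\<forall>\<Gamma>. \<Gamma> \<subseteq> F \<and> \<Gamma> \<noteq> {} \<longrightarrow> card (\<Union>\<Gamma>) + card (\<Inter>\<Gamma>) = 2 * \<alpha>))"

end

theory Submission
  imports Defs
begin

lemma card_split_aux: "finite A \<Longrightarrow> card A = card (A \<inter> B) + card (A - B)"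
proof -
  assume f: "finite A"
  have "A = (A \<inter> B) \<union> (A - B)" by blast
  hence "card A = card ((A \<inter> B) \<union> (A - B))" by simp
  also have "\<dots> = card (A \<inter> B) + card (A - B)"
    by (rule card_Un_disjoint) (use f in auto)
  finally show ?thesis .
qed

lemma fin_Inter: "\<Gamma> \<noteq> {} \<Longrightarrow> \<forall>S\<in>\<Gamma>. finite S \<Longrightarrow> finite (\<Inter>\<Gamma>)"
  by (meson Inf_lower all_not_in_conv finite_subset)

lemma split_lemma:
  assumes "\<Gamma>1 \<noteq> {}" "\<forall>S\<in>\<Gamma>1. finite S"
  shows "card (\<Inter>\<Gamma>1 - \<Union>\<Gamma>2) = card (\<Inter>(insert T \<Gamma>1) - \<Union>\<Gamma>2) + card (\<Inter>\<Gamma>1 - \<Union>(insert T \<Gamma>2))"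
proof -
  have f: "finite (\<Inter>\<Gamma>1 - \<Union>\<Gamma>2)" using fin_Inter[OF assms] by simp
  have "card (\<Inter>\<Gamma>1 - \<Union>\<Gamma>2) = card ((\<Inter>\<Gamma>1 - \<Union>\<Gamma>2) \<inter> T) + card ((\<Inter>\<Gamma>1 - \<Union>\<Gamma>2) - T)"
    using card_split_aux[OF f] .
  moreover have "(\<Inter>\<Gamma>1 - \<Union>\<Gamma>2) \<inter> T = \<Inter>(insert T \<Gamma>1) - \<Union>\<Gamma>2" by blast
  moreover have "(\<Inter>\<Gamma>1 - \<Union>\<Gamma>2) - T = \<Inter>\<Gamma>1 - \<Union>(insert T \<Gamma>2)" by blast
  ultimately show ?thesis by simp
qed

lemma union_step:
  assumes "finite \<Gamma>" "\<forall>S\<in>\<Gamma>. finite S" "finite T"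
  shows "card (\<Union>(insert T \<Gamma>)) = card (\<Union>\<Gamma>) + card (\<Inter>{T} - \<Union>\<Gamma>)"
proof -
  have "\<Union>(insert T \<Gamma>) = \<Union>\<Gamma> \<union> (T - \<Union>\<Gamma>)" by blast
  moreover have "card (\<Union>\<Gamma> \<union> (T - \<Union>\<Gamma>)) = card (\<Union>\<Gamma>) + card (T - \<Union>\<Gamma>)"
    by (rule card_Un_disjoint) (use assms in auto)
  ultimately show ?thesis by simp
qed

lemma inter_step:
  assumes "\<Gamma> \<noteq> {}" "\<forall>S\<in>\<Gamma>. finite S"
  shows "card (\<Inter>\<Gamma>) = card (\<Inter>(insert T \<Gamma>)) + card (\<Inter>\<Gamma> - \<Union>{T})"
proof -
  have "card (\<Inter>\<Gamma>) = card (\<Inter>\<Gamma> \<inter> T) + card (\<Inter>\<Gamma> - T)"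
    using card_split_aux[OF fin_Inter[OF assms]] .
  moreover have "\<Inter>\<Gamma> \<inter> T = \<Inter>(insert T \<Gamma>)" by blast
  ultimately show ?thesis by simp
qed

theorem proposition2p2:
  fixes F :: "'a set set"
  assumes "set_system F" and "uniform F"
  shows "(HKE F \<longleftrightarrow>
           (\<forall>\<Gamma>1 \<Gamma>2. \<Gamma>1 \<subseteq> F \<and> \<Gamma>2 \<subseteq> F \<and> \<Gamma>1 \<noteq> {} \<and> \<Gamma>2 \<noteq> {} \<and> \<Gamma>1 \<inter> \<Gamma>2 = {} \<longrightarrow>
              card (\<Inter>\<Gamma>1 - \<Union>\<Gamma>2) = card (\<Inter>\<Gamma>2 - \<Union>\<Gamma>1)))
       \<and> (HKE F \<longleftrightarrow>
           (\<forall>\<Gamma>1 \<Gamma>2. \<Gamma>1 \<subseteq> F \<and> \<Gamma>2 \<subseteq> F \<and> \<Gamma>1 \<noteq> {} \<and> \<Gamma>2 \<noteq> {} \<and> \<Gamma>1 \<inter> \<Gamma>2 = {}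
              \<and> \<Gamma>1 \<union> \<Gamma>2 = F \<longrightarrow>
              card (\<Inter>\<Gamma>1 - \<Union>\<Gamma>2) = card (\<Inter>\<Gamma>2 - \<Union>\<Gamma>1)))"
proof -
  let ?N = "\<lambda>\<Gamma>1 \<Gamma>2. card (\<Inter>\<Gamma>1 - \<Union>\<Gamma>2)"
  have finF: "finite F" and fin: "\<forall>S\<in>F. finite S" and ne: "F \<noteq> {}"
    using assms(1) unfolding set_system_def by auto
  have finsub: "\<forall>S\<in>G. finite S" if "G \<subseteq> F" for G using fin that by blast
  define P2 where "P2 = (\<forall>\<Gamma>1 \<Gamma>2. \<Gamma>1 \<subseteq> F \<and> \<Gamma>2 \<subseteq> F \<and> \<Gamma>1 \<noteq> {} \<and> \<Gamma>2 \<noteq> {} \<and> \<Gamma>1 \<inter> \<Gamma>2 = {} \<longrightarrow>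
              ?N \<Gamma>1 \<Gamma>2 = ?N \<Gamma>2 \<Gamma>1)"
  define P3 where "P3 = (\<forall>\<Gamma>1 \<Gamma>2. \<Gamma>1 \<subseteq> F \<and> \<Gamma>2 \<subseteq> F \<and> \<Gamma>1 \<noteq> {} \<and> \<Gamma>2 \<noteq> {} \<and> \<Gamma>1 \<inter> \<Gamma>2 = {}
              \<and> \<Gamma>1 \<union> \<Gamma>2 = F \<longrightarrow> ?N \<Gamma>1 \<Gamma>2 = ?N \<Gamma>2 \<Gamma>1)"
  have A2: "P2" if h: "HKE F"
  proof -
    obtain \<alpha> where al: "\<forall>\<Gamma>. \<Gamma> \<subseteq> F \<and> \<Gamma> \<noteq> {} \<longrightarrow> card (\<Union>\<Gamma>) + card (\<Inter>\<Gamma>) = 2 * \<alpha>"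
      using h unfolding HKE_def by blast
    have main: "\<forall>\<Gamma>1. \<Gamma>1 \<subseteq> F \<and> \<Gamma>1 \<noteq> {} \<and> \<Gamma>1 \<inter> \<Gamma>2 = {} \<longrightarrow> ?N \<Gamma>1 \<Gamma>2 = ?N \<Gamma>2 \<Gamma>1"
      if "finite \<Gamma>2" "\<Gamma>2 \<noteq> {}" "\<Gamma>2 \<subseteq> F" for \<Gamma>2
      using that
    proof (induction \<Gamma>2 rule: finite_ne_induct)
      case (singleton T)
      show ?case
      proof (intro allI impI)
        fix \<Gamma>1 assume a: "\<Gamma>1 \<subseteq> F \<and> \<Gamma>1 \<noteq> {} \<and> \<Gamma>1 \<inter> {T} = {}"
        have fG: "finite \<Gamma>1" by (rule finite_subset[OF _ finF]) (use a in auto)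
        have T: "T \<in> F" using singleton by auto
        have e1: "card (\<Union>\<Gamma>1) + card (\<Inter>\<Gamma>1) = 2 * \<alpha>" by (rule al[rule_format]) (use a in auto)
        have e2: "card (\<Union>(insert T \<Gamma>1)) + card (\<Inter>(insert T \<Gamma>1)) = 2 * \<alpha>" by (rule al[rule_format]) (use a T in auto)
        have u: "card (\<Union>(insert T \<Gamma>1)) = card (\<Union>\<Gamma>1) + ?N {T} \<Gamma>1"
          by (rule union_step) (use fG a T fin in auto)
        have i: "card (\<Inter>\<Gamma>1) = card (\<Inter>(insert T \<Gamma>1)) + ?N \<Gamma>1 {T}"
          by (rule inter_step) (use a fin in auto)
        show "?N \<Gamma>1 {T} = ?N {T} \<Gamma>1" using e1 e2 u i by linarith
      qed
    next
      case (insert T \<Gamma>2)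
      show ?case
      proof (intro allI impI)
        fix \<Gamma>1 assume a: "\<Gamma>1 \<subseteq> F \<and> \<Gamma>1 \<noteq> {} \<and> \<Gamma>1 \<inter> insert T \<Gamma>2 = {}"
        have T: "T \<in> F" "T \<notin> \<Gamma>1" using insert a by auto
        have IH: "\<forall>\<Gamma>1. \<Gamma>1 \<subseteq> F \<and> \<Gamma>1 \<noteq> {} \<and> \<Gamma>1 \<inter> \<Gamma>2 = {} \<longrightarrow> ?N \<Gamma>1 \<Gamma>2 = ?N \<Gamma>2 \<Gamma>1"
          using insert by auto
        have s1: "?N \<Gamma>1 \<Gamma>2 = ?N (insert T \<Gamma>1) \<Gamma>2 + ?N \<Gamma>1 (insert T \<Gamma>2)"
          by (rule split_lemma) (use a fin in auto)
        have s2: "?N \<Gamma>2 \<Gamma>1 = ?N (insert T \<Gamma>2) \<Gamma>1 + ?N \<Gamma>2 (insert T \<Gamma>1)"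
          by (rule split_lemma) (use insert fin in auto)
        have i1: "?N \<Gamma>1 \<Gamma>2 = ?N \<Gamma>2 \<Gamma>1" by (rule IH[rule_format]) (use a in auto)
        have i2: "?N (insert T \<Gamma>1) \<Gamma>2 = ?N \<Gamma>2 (insert T \<Gamma>1)"
          by (rule IH[rule_format]) (use a T insert in auto)
        show "?N \<Gamma>1 (insert T \<Gamma>2) = ?N (insert T \<Gamma>2) \<Gamma>1" using s1 s2 i1 i2 by linarith
      qed
    qed
    show ?thesis unfolding P2_def
    proof (intro allI impI)
      fix \<Gamma>1 \<Gamma>2 assume a: "\<Gamma>1 \<subseteq> F \<and> \<Gamma>2 \<subseteq> F \<and> \<Gamma>1 \<noteq> {} \<and> \<Gamma>2 \<noteq> {} \<and> \<Gamma>1 \<inter> \<Gamma>2 = {}"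
      have f2: "finite \<Gamma>2" by (rule finite_subset[OF _ finF]) (use a in auto)
      show "?N \<Gamma>1 \<Gamma>2 = ?N \<Gamma>2 \<Gamma>1" by (rule main[of \<Gamma>2, rule_format]) (use a f2 in auto)
    qed
  qed
  have B1: "HKE F" if h: "P2"
  proof -
    obtain S0 where S0: "S0 \<in> F" using ne by blast
    have main: "card (\<Union>\<Gamma>) + card (\<Inter>\<Gamma>) = 2 * card S0"
      if "finite \<Gamma>" "\<Gamma> \<noteq> {}" "\<Gamma> \<subseteq> F" for \<Gamma>
      using that
    proof (induction \<Gamma> rule: finite_ne_induct)
      case (singleton S)
      have "card S = card S0" using assms(2) S0 singleton unfolding uniform_def by blast
      then show ?case by simp
    next
      case (insert T \<Gamma>)
      have fG: "finite \<Gamma>" by fact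
      have T: "T \<in> F" using insert by auto
      have u: "card (\<Union>(insert T \<Gamma>)) = card (\<Union>\<Gamma>) + ?N {T} \<Gamma>"
        by (rule union_step) (use fG insert T fin in auto)
      have i: "card (\<Inter>\<Gamma>) = card (\<Inter>(insert T \<Gamma>)) + ?N \<Gamma> {T}"
        by (rule inter_step) (use insert fin in auto)
      have e: "?N {T} \<Gamma> = ?N \<Gamma> {T}" by (rule h[unfolded P2_def, rule_format]) (use insert T in auto)
      have "card (\<Union>\<Gamma>) + card (\<Inter>\<Gamma>) = 2 * card S0" by (rule insert.IH) (use insert in auto)
      then show ?case using u i e by linarith
    qed
    have "finite S0" "S0 \<noteq> {}" using S0 assms(1) unfolding set_system_def by auto
    then have "card S0 > 0" by (simp add: card_gt_0_iff)
    then show ?thesis unfolding HKE_def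
    proof (intro exI[of _ "card S0"] conjI allI impI)
      fix \<Gamma> :: "'a set set" assume H: "\<Gamma> \<subseteq> F \<and> \<Gamma> \<noteq> {}"
      show "card (\<Union>\<Gamma>) + card (\<Inter>\<Gamma>) = 2 * card S0"
      proof (rule main)
        show "finite \<Gamma>" by (rule finite_subset[OF _ finF]) (use H in blast)
      qed (use H in auto)
    qed
  qed
  have C2: "P2" if h: "P3"
  proof -
    have main: "\<forall>\<Gamma>1 \<Gamma>2. card (F - (\<Gamma>1 \<union> \<Gamma>2)) = n \<and> \<Gamma>1 \<subseteq> F \<and> \<Gamma>2 \<subseteq> F \<and> \<Gamma>1 \<noteq> {} \<and> \<Gamma>2 \<noteq> {} \<and> \<Gamma>1 \<inter> \<Gamma>2 = {} \<longrightarrow>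
              ?N \<Gamma>1 \<Gamma>2 = ?N \<Gamma>2 \<Gamma>1" for n
    proof (induction n)
      case 0
      show ?case
      proof (intro allI impI)
        fix \<Gamma>1 \<Gamma>2 assume a: "card (F - (\<Gamma>1 \<union> \<Gamma>2)) = 0 \<and> \<Gamma>1 \<subseteq> F \<and> \<Gamma>2 \<subseteq> F \<and> \<Gamma>1 \<noteq> {} \<and> \<Gamma>2 \<noteq> {} \<and> \<Gamma>1 \<inter> \<Gamma>2 = {}"
        then have "F - (\<Gamma>1 \<union> \<Gamma>2) = {}" using finF by simp
        then have U: "\<Gamma>1 \<union> \<Gamma>2 = F" using a by blast
        show "?N \<Gamma>1 \<Gamma>2 = ?N \<Gamma>2 \<Gamma>1" by (rule h[unfolded P3_def, rule_format]) (use a U in auto)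
      qed
    next
      case (Suc n)
      show ?case
      proof (intro allI impI)
        fix \<Gamma>1 \<Gamma>2 assume a: "card (F - (\<Gamma>1 \<union> \<Gamma>2)) = Suc n \<and> \<Gamma>1 \<subseteq> F \<and> \<Gamma>2 \<subseteq> F \<and> \<Gamma>1 \<noteq> {} \<and> \<Gamma>2 \<noteq> {} \<and> \<Gamma>1 \<inter> \<Gamma>2 = {}"
        then obtain T where T: "T \<in> F - (\<Gamma>1 \<union> \<Gamma>2)"
          by (metis card.empty ex_in_conv nat.distinct(1))
        have c1: "card (F - (insert T \<Gamma>1 \<union> \<Gamma>2)) = n"
        proof -
          have "F - (insert T \<Gamma>1 \<union> \<Gamma>2) = (F - (\<Gamma>1 \<union> \<Gamma>2)) - {T}" by blast
          then show ?thesis using a T finF by simp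
        qed
        have c2: "card (F - (\<Gamma>1 \<union> insert T \<Gamma>2)) = n"
        proof -
          have "F - (\<Gamma>1 \<union> insert T \<Gamma>2) = (F - (\<Gamma>1 \<union> \<Gamma>2)) - {T}" by blast
          then show ?thesis using a T finF by simp
        qed
        have s1: "?N \<Gamma>1 \<Gamma>2 = ?N (insert T \<Gamma>1) \<Gamma>2 + ?N \<Gamma>1 (insert T \<Gamma>2)"
          by (rule split_lemma) (use a fin in auto)
        have s2: "?N \<Gamma>2 \<Gamma>1 = ?N (insert T \<Gamma>2) \<Gamma>1 + ?N \<Gamma>2 (insert T \<Gamma>1)"
          by (rule split_lemma) (use a fin in auto)
        have i1: "?N (insert T \<Gamma>1) \<Gamma>2 = ?N \<Gamma>2 (insert T \<Gamma>1)"
          by (rule Suc.IH[rule_format]) (use c1 a T in auto)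
        have i2: "?N \<Gamma>1 (insert T \<Gamma>2) = ?N (insert T \<Gamma>2) \<Gamma>1"
          by (rule Suc.IH[rule_format]) (use c2 a T in auto)
        show "?N \<Gamma>1 \<Gamma>2 = ?N \<Gamma>2 \<Gamma>1" using s1 s2 i1 i2 by linarith
      qed
    qed
    show ?thesis unfolding P2_def
    proof (intro allI impI)
      fix a b assume H: "a \<subseteq> F \<and> b \<subseteq> F \<and> a \<noteq> {} \<and> b \<noteq> {} \<and> a \<inter> b = {}"
      show "?N a b = ?N b a" by (rule main[of "card (F - (a \<union> b))", rule_format]) (use H in auto)
    qed
  qed
  have B3: "P3" if h2: "P2" unfolding P3_def
  proof (intro allI impI)
    fix a b assume H: "a \<subseteq> F \<and> b \<subseteq> F \<and> a \<noteq> {} \<and> b \<noteq> {} \<and> a \<inter> b = {} \<and> a \<union> b = F"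
    show "?N a b = ?N b a" by (rule h2[unfolded P2_def, rule_format]) (use H in auto)
  qed
  have X: "HKE F \<longleftrightarrow> P2" using A2 B1 by blast
  have Y: "HKE F \<longleftrightarrow> P3" using A2 B1 B3 C2 by blast
  show ?thesis using conjI[OF X Y] unfolding P2_def P3_def .
qed

end
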